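(* Let $\epsilon\in(0,1/2)$, $\eta=(A,D)\in(\epsilon,1-\epsilon)^{2p}$, $\xi,\omega,\zeta\in(\epsilon,1-\epsilon)$, and let $\pi$ be an everywhere positive probability mass function on $\Gamma=\{0,1\}^p$. If $\zeta=\xi\omega$, then $$p^{\mathrm{ARN}}_{(\xi\eta,\omega)}(\gamma,\gamma')=p^{\mathrm{ASI}}_{\zeta\eta}(\gamma,\gamma')\quad\text{for all }\gamma,\gamma'\in\Gamma.$$
   Context: $\Gamma=\{0,1\}^p$, $d_H$ is Hamming distance, $c\eta=(cA,cD)$ for scalar $c$. Neighbourhood indicator distribution: $p^{\mathrm{RN}}_{\xi\eta}(k\mid\gamma)=\prod_j p_j(k_j\mid\gamma_j)$, $k\in\{0,1\}^p$, with $p_j(1\mid0)=\xi A_j$, $p_j(0\mid0)=1-\xi A_j$, $p_j(1\mid1)=\xi D_j$, $p_j(0\mid1)=1-\xi D_j$. $N(\gamma,k)=\{\gamma^*:\gamma^*_j=\gamma_j\ \forall j\text{ with }k_j=0\}$, $p_k=\sum_jk_j$, $q^{\mathrm{THIN}}_{\omega,k}(\gamma,\gamma')=\omega^{d_H(\gamma,\gamma')}(1-\omega)^{p_k-d_H(\gamma,\gamma')}\mathbb{I}\{\gamma'\in N(\gamma,k)\}$. ARN acceptance $\alpha^{\mathrm{ARN}}_{(\xi\eta,\omega),k}(\gamma,\gamma')=\min\{1,\frac{\pi(\gamma')p^{\mathrm{RN}}_{\xi\eta}(k\mid\gamma')q^{\mathrm{THIN}}_{\omega,k}(\gamma',\gamma)}{\pi(\gamma)p^{\mathrm{RN}}_{\xi\eta}(k\mid\gamma)q^{\mathrm{THIN}}_{\omega,k}(\gamma,\gamma')}\}$.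 ARN transition kernel: for $\gamma'\neq\gamma$, $p^{\mathrm{ARN}}_{(\xi\eta,\omega)}(\gamma,\gamma')=\sum_{k\in\{0,1\}^p}p^{\mathrm{RN}}_{\xi\eta}(k\mid\gamma)q^{\mathrm{THIN}}_{\omega,k}(\gamma,\gamma')\alpha^{\mathrm{ARN}}_{(\xi\eta,\omega),k}(\gamma,\gamma')$, and $p^{\mathrm{ARN}}(\gamma,\gamma)=1-\sum_{\gamma'\ne\gamma}p^{\mathrm{ARN}}(\gamma,\gamma')$. ASI proposal $q^{\mathrm{ASI}}_{\zeta\eta}(\gamma,\gamma')=\prod_jq_j(\gamma_j,\gamma'_j)$ with $q_j(0,1)=\zeta A_j$, $q_j(0,0)=1-\zeta A_j$, $q_j(1,0)=\zeta D_j$, $q_j(1,1)=1-\zeta D_j$; acceptance $\alpha^{\mathrm{ASI}}_{\zeta\eta}=\min\{1,\frac{\pi(\gamma')q^{\mathrm{ASI}}_{\zeta\eta}(\gamma',\gamma)}{\pi(\gamma)q^{\mathrm{ASI}}_{\zeta\eta}(\gamma,\gamma')}\}$; ASI kernel $p^{\mathrm{ASI}}_{\zeta\eta}(\gamma,\gamma')=q^{\mathrm{ASI}}_{\zeta\eta}(\gamma,\gamma')\alpha^{\mathrm{ASI}}_{\zeta\eta}(\gamma,\gamma')$ for $\gamma'\ne\gamma$ and $p^{\mathrm{ASI}}(\gamma,\gamma)=1-\sum_{\gamma'\ne\gamma}p^{\mathrm{ASI}}(\gamma,\gamma')$. *)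

theory Defs
  imports Complex_Main
begin

text \<open>Models gamma in Gamma = {0,1}^p are functions 'n => bool over a finite index
type 'n with CARD('n) = p; True encodes 1.  Vectors A, D are functions 'n => real.\<close>

definition dH :: "('n::finite \<Rightarrow> bool) \<Rightarrow> ('n \<Rightarrow> bool) \<Rightarrow> nat" where
  "dH g g' = card {j. g j \<noteq> g' j}"

definition pRN :: "real \<Rightarrow> ('n::finite \<Rightarrow> real) \<Rightarrow> ('n \<Rightarrow> real)
    \<Rightarrow> ('n \<Rightarrow> bool) \<Rightarrow> ('n \<Rightarrow> bool) \<Rightarrow> real" where
  "pRN xi A D k g = (\<Prod>j\<in>UNIV.
     (if g j then (if k j then xi * D j else 1 - xi * D j)
             else (if k j then xi * A j else 1 - xi * A j)))"

definition nbhd :: "('n::finite \<Rightarrow> bool) \<Rightarrow> ('n \<Rightarrow> bool) \<Rightarrow> ('n \<Rightarrow> bool) set" where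
  "nbhd g k = {g'. \<forall>j. \<not> k j \<longrightarrow> g' j = g j}"

definition pk :: "('n::finite \<Rightarrow> bool) \<Rightarrow> nat" where
  "pk k = card {j. k j}"

definition qTHIN :: "real \<Rightarrow> ('n::finite \<Rightarrow> bool) \<Rightarrow> ('n \<Rightarrow> bool) \<Rightarrow> ('n \<Rightarrow> bool) \<Rightarrow> real" where
  "qTHIN om k g g' = om ^ dH g g' * (1 - om) ^ (pk k - dH g g')
      * (if g' \<in> nbhd g k then 1 else 0)"

definition alphaARN :: "(('n::finite \<Rightarrow> bool) \<Rightarrow> real) \<Rightarrow> real \<Rightarrow> ('n \<Rightarrow> real) \<Rightarrow> ('n \<Rightarrow> real)
    \<Rightarrow> real \<Rightarrow> ('n \<Rightarrow> bool) \<Rightarrow> ('n \<Rightarrow> bool) \<Rightarrow> ('n \<Rightarrow> bool) \<Rightarrow> real" where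
  "alphaARN pm xi A D om k g g' = min 1
     ((pm g' * pRN xi A D k g' * qTHIN om k g' g) / (pm g * pRN xi A D k g * qTHIN om k g g'))"

definition pARN_off :: "(('n::finite \<Rightarrow> bool) \<Rightarrow> real) \<Rightarrow> real \<Rightarrow> ('n \<Rightarrow> real) \<Rightarrow> ('n \<Rightarrow> real)
    \<Rightarrow> real \<Rightarrow> ('n \<Rightarrow> bool) \<Rightarrow> ('n \<Rightarrow> bool) \<Rightarrow> real" where
  "pARN_off pm xi A D om g g' =
     (\<Sum>k\<in>UNIV. pRN xi A D k g * qTHIN om k g g' * alphaARN pm xi A D om k g g')"

definition pARN :: "(('n::finite \<Rightarrow> bool) \<Rightarrow> real) \<Rightarrow> real \<Rightarrow> ('n \<Rightarrow> real) \<Rightarrow> ('n \<Rightarrow> real)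
    \<Rightarrow> real \<Rightarrow> ('n \<Rightarrow> bool) \<Rightarrow> ('n \<Rightarrow> bool) \<Rightarrow> real" where
  "pARN pm xi A D om g g' =
     (if g' \<noteq> g then pARN_off pm xi A D om g g'
      else 1 - (\<Sum>g''\<in>UNIV - {g}. pARN_off pm xi A D om g g''))"

definition qASI :: "real \<Rightarrow> ('n::finite \<Rightarrow> real) \<Rightarrow> ('n \<Rightarrow> real)
    \<Rightarrow> ('n \<Rightarrow> bool) \<Rightarrow> ('n \<Rightarrow> bool) \<Rightarrow> real" where
  "qASI ze A D g g' = (\<Prod>j\<in>UNIV.
     (if g j then (if g' j then 1 - ze * D j else ze * D j)
             else (if g' j then ze * A j else 1 - ze * A j)))"

definition alphaASI :: "(('n::finite \<Rightarrow> bool) \<Rightarrow> real) \<Rightarrow> real \<Rightarrow> ('n \<Rightarrow> real) \<Rightarrow> ('n \<Rightarrow> real)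
    \<Rightarrow> ('n \<Rightarrow> bool) \<Rightarrow> ('n \<Rightarrow> bool) \<Rightarrow> real" where
  "alphaASI pm ze A D g g' = min 1
     ((pm g' * qASI ze A D g' g) / (pm g * qASI ze A D g g'))"

definition pASI_off :: "(('n::finite \<Rightarrow> bool) \<Rightarrow> real) \<Rightarrow> real \<Rightarrow> ('n \<Rightarrow> real) \<Rightarrow> ('n \<Rightarrow> real)
    \<Rightarrow> ('n \<Rightarrow> bool) \<Rightarrow> ('n \<Rightarrow> bool) \<Rightarrow> real" where
  "pASI_off pm ze A D g g' = qASI ze A D g g' * alphaASI pm ze A D g g'"

definition pASI :: "(('n::finite \<Rightarrow> bool) \<Rightarrow> real) \<Rightarrow> real \<Rightarrow> ('n \<Rightarrow> real) \<Rightarrow> ('n \<Rightarrow> real)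
    \<Rightarrow> ('n \<Rightarrow> bool) \<Rightarrow> ('n \<Rightarrow> bool) \<Rightarrow> real" where
  "pASI pm ze A D g g' =
     (if g' \<noteq> g then pASI_off pm ze A D g g'
      else 1 - (\<Sum>g''\<in>UNIV - {g}. pASI_off pm ze A D g g''))"

end

theory Submission
  imports Defs "HOL-Library.FuncSet"
begin

lemma sum_fun_prod:
  fixes f :: "'n::finite \<Rightarrow> bool \<Rightarrow> real"
  shows "(\<Sum>k\<in>UNIV. \<Prod>j\<in>UNIV. f j (k j)) = (\<Prod>j\<in>UNIV. f j True + f j False)"
proof -
  have "(\<Prod>j\<in>UNIV. \<Sum>b\<in>UNIV. f j b) = (\<Sum>k\<in>PiE UNIV (\<lambda>_. UNIV). \<Prod>j\<in>UNIV. f j (k j))"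
    by (rule prod_sum_PiE) auto
  moreover have "\<And>j. (\<Sum>b\<in>UNIV. f j b) = f j True + f j False"
    by (simp add: UNIV_bool)
  ultimately show ?thesis by simp
qed

lemma qTHIN_prod:
  "qTHIN om k g g' = (\<Prod>j\<in>UNIV. if g j \<noteq> g' j then (if k j then om else 0)
                                 else (if k j then 1 - om else 1))"
proof -
  define S where "S = {j. g j \<noteq> g' j}"
  define K where "K = {j. k j}"
  show ?thesis
  proof (cases "S \<subseteq> K")
    case True
    have nb: "g' \<in> nbhd g k" using True unfolding S_def K_def nbhd_def by auto
    have "(\<Prod>j\<in>UNIV. if g j \<noteq> g' j then (if k j then om else 0)
                                 else (if k j then 1 - om else 1))
        = (\<Prod>j\<in>UNIV. (if j \<in> S then om else 1) * (if j \<in> K - S then 1 - om else 1))"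
      using True unfolding S_def K_def by (intro prod.cong) auto
    also have "\<dots> = (\<Prod>j\<in>UNIV. if j \<in> S then om else 1) * (\<Prod>j\<in>UNIV. if j \<in> K - S then 1 - om else 1)"
      by (rule prod.distrib)
    also have "(\<Prod>j\<in>UNIV. if j \<in> S then om else 1) = om ^ card S"
      by (simp add: prod.If_cases Int_absorb1 [OF subset_UNIV] flip: prod_constant)
    also have "(\<Prod>j\<in>UNIV. if j \<in> K - S then 1 - om else 1) = (1 - om) ^ card (K - S)"
      by (simp add: prod.If_cases set_diff_eq flip: prod_constant)
    also have "card (K - S) = card K - card S" using True by (simp add: card_Diff_subset)
    finally show ?thesis using nb unfolding qTHIN_def dH_def pk_def S_def K_def by simp
  next
    case False
    then obtain j where j: "j \<in> S" "\<not> k j" unfolding K_def by auto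
    have nb: "g' \<notin> nbhd g k" using j unfolding S_def nbhd_def by auto
    have "(\<Prod>j\<in>UNIV. if g j \<noteq> g' j then (if k j then om else 0)
                                 else (if k j then 1 - om else 1)) = (0::real)"
      using j unfolding S_def by (intro prod_zero) auto
    thus ?thesis using nb unfolding qTHIN_def by simp
  qed
qed

theorem theorem1:
  fixes eps xi om ze :: real
    and A D :: "'n::finite \<Rightarrow> real"
    and pm :: "('n \<Rightarrow> bool) \<Rightarrow> real"
  assumes "0 < eps" "eps < 1/2"
    and "\<forall>j. eps < A j \<and> A j < 1 - eps"
    and "\<forall>j. eps < D j \<and> D j < 1 - eps"
    and "eps < xi" "xi < 1 - eps"
    and "eps < om" "om < 1 - eps"
    and "eps < ze" "ze < 1 - eps"
    and "\<forall>g. 0 < pm g" "(\<Sum>g\<in>UNIV. pm g) = 1"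
    and "ze = xi * om"
  shows "\<forall>g g'. pARN pm xi A D om g g' = pASI pm ze A D g g'"
proof -
  have A0: "0 < A j" "A j < 1" for j using assms(1,2,3) by (smt (verit))+
  have D0: "0 < D j" "D j < 1" for j using assms(1,2,4) by (smt (verit))+
  have xi0: "0 < xi" "xi < 1" using assms by auto
  have ze0: "0 < ze" "ze < 1" using assms by auto
  have mul1: "0 < x * y" "x * y < 1" if "0 < x" "x < 1" "0 < y" "y < 1" for x y :: real
    using that by (auto intro: mult_pos_pos) (metis mult_strict_mono' less_le_not_le mult_1_right mult_less_cancel_left1 that(1) that(3) that(4) order.strict_trans)
  have pRNpos: "0 < pRN xi A D k g" for k g
    unfolding pRN_def
    using mul1[OF xi0 A0] mul1[OF xi0 D0] by (intro prod_pos) auto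
  have qASIpos: "0 < qASI ze A D g g'" for g g'
    unfolding qASI_def
    using mul1[OF ze0 A0] mul1[OF ze0 D0] by (intro prod_pos) auto
  have off: "pARN_off pm xi A D om g g' = pASI_off pm ze A D g g'" for g g'
  proof -
    let ?a = "alphaASI pm ze A D g g'"
    have trm: "pRN xi A D k g * qTHIN om k g g' * alphaARN pm xi A D om k g g'
              = pRN xi A D k g * qTHIN om k g g' * ?a" for k
    proof (cases "qTHIN om k g g' = 0")
      case True thus ?thesis by simp
    next
      case False
      have sub: "\<And>j. g j \<noteq> g' j \<Longrightarrow> k j"
      proof (rule ccontr)
        fix j assume "g j \<noteq> g' j" "\<not> k j"
        hence "g' \<notin> nbhd g k" unfolding nbhd_def by auto
        thus False using False unfolding qTHIN_def by simp
      qed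
      have sym: "qTHIN om k g' g = qTHIN om k g g'"
        unfolding qTHIN_prod by (intro prod.cong) auto
      have key: "pRN xi A D k g' * qASI ze A D g g' = qASI ze A D g' g * pRN xi A D k g"
        unfolding pRN_def qASI_def prod.distrib[symmetric]
        using sub by (intro prod.cong) (auto simp: assms(13))
      have pmg: "0 < pm g" "0 < pm g'" using assms(11) by auto
      have "(pm g' * pRN xi A D k g' * qTHIN om k g' g) / (pm g * pRN xi A D k g * qTHIN om k g g')
          = (pm g' * qASI ze A D g' g) / (pm g * qASI ze A D g g')"
        using pmg pRNpos[of k g] qASIpos[of g g'] False key unfolding sym
        by (simp add: field_simps)
      thus ?thesis unfolding alphaARN_def alphaASI_def by simp
    qed
    have "pARN_off pm xi A D om g g' = (\<Sum>k\<in>UNIV. pRN xi A D k g * qTHIN om k g g') * ?a"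
      unfolding pARN_off_def trm sum_distrib_right ..
    also have "(\<Sum>k\<in>UNIV. pRN xi A D k g * qTHIN om k g g') = qASI ze A D g g'"
    proof -
      have "(\<Sum>k\<in>UNIV. pRN xi A D k g * qTHIN om k g g')
          = (\<Sum>k\<in>UNIV. \<Prod>j\<in>UNIV.
              (if g j then (if k j then xi * D j else 1 - xi * D j)
                 else (if k j then xi * A j else 1 - xi * A j)) *
              (if g j \<noteq> g' j then (if k j then om else 0) else (if k j then 1 - om else 1)))"
        unfolding pRN_def qTHIN_prod prod.distrib ..
      also have "\<dots> = qASI ze A D g g'"
      proof -
        let ?F = "\<lambda>j b. (if g j then (if b then xi * D j else 1 - xi * D j)
                 else (if b then xi * A j else 1 - xi * A j)) *
              (if g j \<noteq> g' j then (if b then om else 0) else (if b then 1 - om else 1))"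
        have "(\<Sum>k\<in>UNIV. \<Prod>j\<in>UNIV. ?F j (k j)) = (\<Prod>j\<in>UNIV. ?F j True + ?F j False)"
          by (rule sum_fun_prod)
        also have "\<dots> = qASI ze A D g g'"
          unfolding qASI_def
          by (intro prod.cong) (auto simp: assms(13) algebra_simps)
        finally show ?thesis .
      qed
      finally show ?thesis .
    qed
    finally show ?thesis unfolding pASI_off_def .
  qed
  show ?thesis unfolding pARN_def pASI_def off by simp
qed

end
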